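(* Let $m,k$ be natural numbers. If the leading term in the hereditary representation in base $k+1$ of the $k$-th term $G(k,m)$ of the Goodstein sequence $G(m)$ is of the form $1\cdot(k+1)^{l}$ with $k+1>l$, then $G(k+1,m)>G(k,m)$ if $l>1$, $G(k+1,m)=G(k,m)$ if $l=1$, and $G(k+1,m)<G(k,m)$ if $l=0$.
   Context: For a natural number base $b>1$, the hereditary representation $m\langle b\rangle$ of $m$ is $\sum_{i=0}^{l} a_i b^{i}$ with $0\le a_i<b$, $a_l\ne0$, each exponent itself written in hereditary representation in base $b$, recursively; its leading term is $a_l b^{l}$. $m\langle b\rangle''$ is obtained by syntactically replacing every $b$ by $b+1$ in $m\langle b\rangle$. The Goodstein sequence $G(m)=\{m, m''-1, (m''-1)''-1,\dots\}$ starts from $m$ in base $2$; its $n$-th term is $G(n,m)$, with $G(1,m)=m$ in base $2$, $G(k,m)$ written in base $k+1$, and $G(k+1,m)=G(k,m)\langle k+1\rangle''-1$. *)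

theory Defs
  imports Main
begin

(* Hereditary base bump: write n in hereditary base b and replace every b by b+1.
   n = sum_i a_i b^i with digits a_i = n div b^i mod b (only i < n can carry a
   nonzero digit when b >= 2), exponents i themselves written hereditarily. *)
function bump :: "nat \<Rightarrow> nat \<Rightarrow> nat" where
  "bump b n = (\<Sum>i<n. (n div b ^ i mod b) * (b + 1) ^ (bump b i))"
  by pat_completeness auto
termination
proof (relation "measure snd")
  show "wf (measure snd)" by simp
next
  fix b n i :: nat
  assume "i \<in> {..<n}"
  then show "((b, i), (b, n)) \<in> measure snd" by simp
qed

declare bump.simps [simp del]

(* exponent l of the leading term a_l b^l of n (for n > 0, b > 1) *)
definition lead_exp :: "nat \<Rightarrow> nat \<Rightarrow> nat" where
  "lead_exp b n = (GREATEST i. b ^ i \<le> n)"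

definition lead_digit :: "nat \<Rightarrow> nat \<Rightarrow> nat" where
  "lead_digit b n = n div b ^ lead_exp b n"

(* Goodstein sequence: goodstein k m = G(k,m), k >= 1; G(1,m) = m (base 2),
   G(k+1,m) = G(k,m)<k+1>'' - 1.  The index 0 value is an irrelevant dummy. *)
fun goodstein :: "nat \<Rightarrow> nat \<Rightarrow> nat" where
  "goodstein 0 m = m"
| "goodstein (Suc 0) m = m"
| "goodstein (Suc (Suc k)) m = bump (Suc (Suc k)) (goodstein (Suc k) m) - 1"

end

theory Submission
  imports Defs
begin

lemma digits_sum:
  assumes "(b::nat) \<ge> 2" "n < b ^ N"
  shows "n = (\<Sum>i<N. (n div b ^ i mod b) * b ^ i)"
  using assms(2)
proof (induction N arbitrary: n)
  case 0
  then show ?case by simp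
next
  case (Suc N)
  have "n div b < b ^ N" using Suc.prems assms(1)
    by (metis less_mult_imp_div_less power_Suc2)
  then have ih: "n div b = (\<Sum>i<N. (n div b div b ^ i mod b) * b ^ i)" using Suc.IH by blast
  have "(\<Sum>i<Suc N. (n div b ^ i mod b) * b ^ i)
      = n mod b + (\<Sum>i<N. (n div b ^ Suc i mod b) * b ^ Suc i)"
    by (subst sum.lessThan_Suc_shift) simp
  also have "\<dots> = n mod b + b * (\<Sum>i<N. (n div b div b ^ i mod b) * b ^ i)"
    by (simp add: sum_distrib_left div_mult2_eq mult.assoc mult.left_commute)
  also have "\<dots> = n" using ih by simp
  finally show ?case by simp
qed

lemma lt_pow: "b \<ge> 2 \<Longrightarrow> (i::nat) < b ^ i"
proof -
  assume "b \<ge> 2"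
  have "i < 2 ^ i" by (rule less_exp)
  also have "\<dots> \<le> b ^ i" using \<open>b \<ge> 2\<close> by (rule power_mono) simp
  finally show ?thesis .
qed

lemma bump_ge: "b \<ge> 2 \<Longrightarrow> n \<le> bump b n"
proof (induction n rule: less_induct)
  case (less n)
  have "n = (\<Sum>i<n. (n div b ^ i mod b) * b ^ i)"
    using digits_sum[OF less.prems lt_pow[OF less.prems]] .
  also have "\<dots> \<le> (\<Sum>i<n. (n div b ^ i mod b) * (b + 1) ^ bump b i)"
  proof (rule sum_mono)
    fix i assume "i \<in> {..<n}"
    then have "i \<le> bump b i" using less by simp
    then have "b ^ i \<le> b ^ bump b i" using less.prems by (simp add: power_increasing)
    also have "\<dots> \<le> (b + 1) ^ bump b i" by (simp add: power_mono)
    finally show "(n div b ^ i mod b) * b ^ i \<le> (n div b ^ i mod b) * (b + 1) ^ bump b i" by simp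
  qed
  also have "\<dots> = bump b n" by (simp add: bump.simps[of b n])
  finally show ?case .
qed

lemma bump0: "bump b 0 = 0" by (simp add: bump.simps[of b 0])

lemma bump_ext:
  assumes "b \<ge> 2" "n \<le> N"
  shows "bump b n = (\<Sum>i<N. (n div b ^ i mod b) * (b + 1) ^ bump b i)"
proof -
  have "(\<Sum>i<N. (n div b ^ i mod b) * (b + 1) ^ bump b i) = (\<Sum>i<n. (n div b ^ i mod b) * (b + 1) ^ bump b i)"
  proof (rule sum.mono_neutral_right)
    show "\<forall>i\<in>{..<N} - {..<n}. (n div b ^ i mod b) * (b + 1) ^ bump b i = 0"
    proof
      fix i assume "i \<in> {..<N} - {..<n}"
      then have "n < b ^ i" using lt_pow[OF assms(1), of i] by auto
      then show "(n div b ^ i mod b) * (b + 1) ^ bump b i = 0" by simp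
    qed
  qed (use assms in auto)
  then show ?thesis by (simp add: bump.simps[of b n])
qed

lemma bump_small:
  assumes "b \<ge> 2" "n < b"
  shows "bump b n = n"
proof (cases "n = 0")
  case True then show ?thesis by (simp add: bump0)
next
  case False
  have "(\<Sum>i<n. (n div b ^ i mod b) * (b + 1) ^ bump b i) = (\<Sum>i\<in>{0}. (n div b ^ i mod b) * (b + 1) ^ bump b i)"
  proof (rule sum.mono_neutral_right)
    show "\<forall>i\<in>{..<n} - {0}. (n div b ^ i mod b) * (b + 1) ^ bump b i = 0"
    proof
      fix i assume "i \<in> {..<n} - {0}"
      then have "b ^ 1 \<le> b ^ i" using assms by (intro power_increasing) auto
      then have "b \<le> b ^ i" by simp
      then have "n div b ^ i = 0" using assms by simp
      then show "(n div b ^ i mod b) * (b + 1) ^ bump b i = 0" by simp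
    qed
  qed (use False in auto)
  then show ?thesis using assms by (simp add: bump.simps[of b n] bump0)
qed

lemma digit_split:
  assumes "(b::nat) \<ge> 2" "r < b ^ l"
  shows "(b ^ l + r) div b ^ i mod b = r div b ^ i mod b + (if i = l then 1 else 0)"
proof (cases "i \<le> l")
  case True
  have bp: "b ^ i > 0" using assms by simp
  have "b ^ l = b ^ (l - i) * b ^ i" using True by (simp add: power_add[symmetric])
  then have "(b ^ l + r) div b ^ i = b ^ (l - i) + r div b ^ i"
    using bp by simp
  show ?thesis
  proof (cases "i = l")
    case True
    then have "r div b ^ i = 0" using assms by simp
    then show ?thesis using \<open>(b ^ l + r) div b ^ i = _\<close> True assms by simp
  next
    case False
    then have "l - i = Suc (l - i - 1)" using \<open>i \<le> l\<close> by simp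
    then have "b ^ (l - i) = b * b ^ (l - i - 1)" by (metis power_Suc)
    then show ?thesis using \<open>(b ^ l + r) div b ^ i = _\<close> False by simp
  qed
next
  case False
  have "2 * b ^ l \<le> b * b ^ l" using assms by (intro mult_right_mono) auto
  then have "b ^ l + r < b ^ Suc l" using assms by (simp only: power_Suc)
  also have "\<dots> \<le> b ^ i" using False assms by (intro power_increasing) auto
  finally have 1: "(b ^ l + r) div b ^ i = 0" by simp
  have "r < b ^ i" using assms False
    by (meson less_le_trans nat_le_linear one_le_numeral power_increasing le_trans)
  then show ?thesis using 1 False by simp
qed

lemma bump_split:
  assumes "b \<ge> 2" "r < b ^ l"
  shows "bump b (b ^ l + r) = (b + 1) ^ bump b l + bump b r"
proof -
  let ?n = "b ^ l + r"
  have ln: "l < ?n" using lt_pow[OF assms(1), of l] by simp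
  have "bump b ?n = (\<Sum>i<?n. (?n div b ^ i mod b) * (b + 1) ^ bump b i)"
    by (rule bump_ext[OF assms(1)]) simp
  also have "\<dots> = (\<Sum>i<?n. (r div b ^ i mod b) * (b + 1) ^ bump b i + (if i = l then (b + 1) ^ bump b i else 0))"
    by (rule sum.cong) (simp_all add: digit_split[OF assms] distrib_right)
  also have "\<dots> = (\<Sum>i<?n. (r div b ^ i mod b) * (b + 1) ^ bump b i) + (b + 1) ^ bump b l"
    using ln by (simp add: sum.distrib)
  also have "(\<Sum>i<?n. (r div b ^ i mod b) * (b + 1) ^ bump b i) = bump b r"
    by (rule bump_ext[OF assms(1), symmetric]) simp
  finally show ?thesis by simp
qed

lemma pow_gap:
  assumes "l \<ge> 2" "(b::nat) \<ge> 2"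
  shows "b ^ l + 2 \<le> (b + 1) ^ l"
  using assms(1)
proof (induction l rule: dec_induct)
  case base
  then show ?case using assms(2) by (simp add: power2_eq_square algebra_simps)
next
  case (step l)
  have "b ^ Suc l + 2 \<le> b * (b ^ l + 2)" using assms(2) by (simp add: algebra_simps)
  also have "\<dots> \<le> (b + 1) * (b + 1) ^ l" using mult_mono[OF _ step.IH, of b "b+1"] by simp
  finally show ?case using assms(2) by simp
qed

theorem lemma5:
  fixes m k l :: nat
  assumes "k \<ge> 1"
    and "goodstein k m > 0"
    and "lead_digit (k + 1) (goodstein k m) = 1"
    and "lead_exp (k + 1) (goodstein k m) = l"
    and "k + 1 > l"
  shows "(l > 1 \<longrightarrow> goodstein (k + 1) m > goodstein k m)
       \<and> (l = 1 \<longrightarrow> goodstein (k + 1) m = goodstein k m)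
       \<and> (l = 0 \<longrightarrow> goodstein (k + 1) m < goodstein k m)"
proof -
  define b where "b = k + 1"
  define n where "n = goodstein k m"
  define r where "r = n mod b ^ l"
  have b2: "b \<ge> 2" using assms(1) b_def by simp
  have d: "n div b ^ l = 1" using assms(3,4) unfolding lead_digit_def n_def b_def by simp
  have nr: "n = b ^ l + r" using d unfolding r_def by (metis div_mult_mod_eq mult_1)
  have rl: "r < b ^ l" using b2 unfolding r_def by simp
  have g: "goodstein (k + 1) m = bump b n - 1"
    using assms(1) unfolding b_def n_def by (cases k) auto
  have bl: "bump b l = l" using bump_small[OF b2] assms(5) b_def by simp
  have bn: "bump b n = (b + 1) ^ l + bump b r" using bump_split[OF b2 rl] nr bl by simp
  have rge: "r \<le> bump b r" using bump_ge[OF b2] .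
  show ?thesis
  proof (intro conjI impI)
    assume "l > 1"
    then have "b ^ l + 2 \<le> (b + 1) ^ l" using pow_gap[OF _ b2] by simp
    then show "goodstein (k + 1) m > goodstein k m"
      using g bn rge nr unfolding n_def[symmetric] by linarith
  next
    assume l1: "l = 1"
    then have "bump b r = r" using bump_small[OF b2] rl by simp
    then show "goodstein (k + 1) m = goodstein k m"
      using g bn nr l1 unfolding n_def[symmetric] by simp
  next
    assume l0: "l = 0"
    then have "r = 0" using rl by simp
    then show "goodstein (k + 1) m < goodstein k m"
      using g bn nr l0 bump0[of b] unfolding n_def[symmetric] by simp
  qed
qed

end
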